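(* Assume $\mu=\mathbb{E}[R]<\infty$. Then for every $\beta\in(0,1)$ there exists $\alpha=\alpha(\beta,\mu)<1$ such that $$\lim_{n\to\infty}\mathbb{P}(A_\alpha(\beta))=0,\qquad A_\alpha(\beta)=\{\exists\,x\neq y\in\mathcal{V}_\alpha:\ |x-y|<n^\beta\},$$ where $\mathcal{V}_\alpha=(\mathbb{Z}/n\mathbb{Z})\setminus X_{\alpha n\ln n/\mu}$.
   Context: Covering process: $R$ takes values in $\{1,2,\dots\}$, $f(r)=\mathbb{P}(R\ge r)$. On $\mathbb{Z}/n\mathbb{Z}$, let $(R_k)$ be i.i.d. copies of $R$, $(U_k)$ i.i.d. uniform on $\mathbb{Z}/n\mathbb{Z}$, independent; $\mathcal{O}_k=\{U_k,\dots,U_k+R_k-1\}$ (mod $n$), $C_0=\emptyset$, $C_k=C_{k-1}\cup\mathcal{O}_k$; with an independent rate-one Poisson process $N(t)$, $X_t=C_{N(t)}$. $|x-y|$ is the distance in the torus $\mathbb{Z}/n\mathbb{Z}$. The parameter $\alpha$ is taken in $(0,1)$. *)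

theory Defs
  imports "HOL-Probability.Probability"
begin

text \<open>The torus Z/nZ is represented by {0..<n}.  The arc O = {u,...,u+r-1} mod n.\<close>
definition arc :: "nat \<Rightarrow> nat \<Rightarrow> nat \<Rightarrow> nat set" where
  "arc n u r = {(u + i) mod n | i. i < r}"

fun covered :: "nat pmf \<Rightarrow> nat \<Rightarrow> nat \<Rightarrow> nat set pmf" where
  "covered R n 0 = return_pmf {}"
| "covered R n (Suc k) =
     bind_pmf (covered R n k) (\<lambda>C. bind_pmf R (\<lambda>r. bind_pmf (pmf_of_set {0..<n})
        (\<lambda>u. return_pmf (C \<union> arc n u r))))"

text \<open>Law of X_t = C_{N(t)}, N a rate-one Poisson process independent of everything.\<close>
definition cover_proc :: "nat pmf \<Rightarrow> nat \<Rightarrow> real \<Rightarrow> nat set pmf" where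
  "cover_proc R n t = bind_pmf (poisson_pmf t) (\<lambda>k. covered R n k)"

definition tdist :: "nat \<Rightarrow> nat \<Rightarrow> nat \<Rightarrow> nat" where
  "tdist n x y = min ((x + n - y) mod n) ((y + n - x) mod n)"

definition uncovered :: "nat \<Rightarrow> nat set \<Rightarrow> nat set" where
  "uncovered n X = {0..<n} - X"

definition close_pair :: "nat \<Rightarrow> real \<Rightarrow> nat set \<Rightarrow> bool" where
  "close_pair n \<beta> X \<longleftrightarrow> (\<exists>x\<in>uncovered n X. \<exists>y\<in>uncovered n X. x \<noteq> y \<and> real (tdist n x y) < real n powr \<beta>)"

end

theory Submission imports Defs begin

definition hitset :: "nat \<Rightarrow> nat \<Rightarrow> nat \<Rightarrow> nat \<Rightarrow> nat set" where
  "hitset n x y r = {u \<in> {0..<n}. x \<in> arc n u r \<or> y \<in> arc n u r}"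

lemma in_arc_back: assumes "x < n" "j < r" "j \<le> n" shows "x \<in> arc n ((x + n - j) mod n) r"
proof -
  have "((x + n - j) mod n + j) mod n = x"
    using assms by (simp add: mod_add_left_eq)
  then show ?thesis unfolding arc_def using assms(2) by (auto intro!: exI[of _ j])
qed

lemma nat_mod_dvd: "(a::nat) mod n = b mod n \<Longrightarrow> int n dvd int a - int b"
  by (metis mod_eq_dvd_iff of_nat_mod)

lemma dvd_small: "int n dvd k \<Longrightarrow> 0 < k \<Longrightarrow> k < int n \<Longrightarrow> False"
  using zdvd_imp_le by fastforce

lemma inj_back: fixes s n z :: nat assumes "s \<le> n" "z < n" shows "inj_on (\<lambda>j. (z + n - j) mod n) {..<s}"
proof (rule inj_onI)
  fix i j assume i: "i \<in> {..<s}" and j: "j \<in> {..<s}" and eq: "(z + n - i) mod n = (z + n - j) mod n"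
  have d: "int n dvd int (z + n - i) - int (z + n - j)" using nat_mod_dvd[OF eq] .
  have e: "int (z + n - i) - int (z + n - j) = int j - int i" using i j assms by auto
  show "i = j"
  proof (rule ccontr)
    assume "i \<noteq> j"
    then consider "i < j" | "j < i" by linarith
    then show False
    proof cases
      case 1 then show False using dvd_small[of n "int j - int i"] d e i j assms by auto
    next
      case 2
      have "int n dvd int i - int j" using d e by (metis dvd_minus_iff minus_diff_eq)
      then show False using dvd_small[of n "int i - int j"] 2 i j assms by auto
    qed
  qed
qed

lemma hit_card_aux:
  assumes n: "0 < n" and xy: "x < n" "y = (x + e) mod n" and e: "1 \<le> e" and s: "s \<le> r" "e + s \<le> n"
    and m: "m \<le> s" "m \<le> e"
  shows "s + m \<le> card (hitset n x y r)"
proof -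
  define A where "A = (\<lambda>j. (x + n - j) mod n) ` {..<s}"
  define B where "B = (\<lambda>j. (y + n - j) mod n) ` {..<m}"
  have y: "y < n" using xy n by simp
  have "A \<subseteq> hitset n x y r" unfolding A_def hitset_def using in_arc_back[OF xy(1)] s n by auto
  moreover have "B \<subseteq> hitset n x y r" unfolding B_def hitset_def using in_arc_back[OF y] s m n by auto
  ultimately have sub: "A \<union> B \<subseteq> hitset n x y r" by blast
  have injA: "inj_on (\<lambda>j. (x + n - j) mod n) {..<s}" using inj_back[of s n x] xy s by simp
  have injB: "inj_on (\<lambda>j. (y + n - j) mod n) {..<m}" using inj_back[of m n y] y s m by simp
  have disj: "A \<inter> B = {}"
  proof (rule ccontr)
    assume "A \<inter> B \<noteq> {}"
    then obtain i j where i: "i < s" and j: "j < m" and eq: "(x + n - i) mod n = (y + n - j) mod n"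
      unfolding A_def B_def by auto
    have d1: "int n dvd int (x + n - i) - int (y + n - j)" using nat_mod_dvd[OF eq] .
    have d2: "int n dvd int (x + e) - int y" using nat_mod_dvd[of "x+e" n y] xy y by simp
    have d3: "int n dvd (int (x + n - i) - int (y + n - j)) - (int (x + e) - int y)"
      using d1 d2 by (rule dvd_diff)
    have d4: "(int (x + n - i) - int (y + n - j)) - (int (x + e) - int y) = int j - int i - int e"
      using i j s m xy y by auto
    have "int n dvd int j - int i - int e" using d3 unfolding d4 .
    then have "int n dvd int e + int i - int j" by (metis dvd_minus_iff minus_diff_eq diff_diff_eq add.commute)
    moreover have "0 < int e + int i - int j" "int e + int i - int j < int n" using i j s m e by auto
    ultimately show False using dvd_small by blast
  qed
  have "card (A \<union> B) = s + m" using disj injA injB unfolding A_def B_def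
    by (simp add: card_Un_disjoint card_image)
  moreover have "finite (hitset n x y r)" unfolding hitset_def by auto
  ultimately show ?thesis using sub by (metis card_mono)
qed

lemma mod_back: fixes x y n :: nat assumes "x < n" "y < n"
  shows "(x + n - y) mod n = (if y \<le> x then x - y else x + n - y)"
proof (cases "y \<le> x")
  case True
  then have "x + n - y = (x - y) + n" by simp
  then have "(x + n - y) mod n = (x - y) mod n" by simp
  moreover have "x - y < n" using assms by simp
  ultimately show ?thesis using True by simp
next
  case False then show ?thesis using assms by simp
qed

lemma tdist_pos: fixes x y n :: nat assumes "x < n" "y < n" "x \<noteq> y" shows "1 \<le> tdist n x y"
  using assms unfolding tdist_def by (auto simp: mod_back)

lemma hitset_sym: "hitset n x y r = hitset n y x r" unfolding hitset_def by auto

lemma hit_card: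
  fixes n x y M r :: nat
  assumes xy: "x < n" "y < n" "x \<noteq> y" and M: "4 * M \<le> n"
  shows "min r M + min r (min M (tdist n x y)) \<le> card (hitset n x y r)"
proof -
  define a where "a = (y + n - x) mod n"
  define b where "b = (x + n - y) mod n"
  have ab: "a + b = n" "1 \<le> a" "1 \<le> b" using xy unfolding a_def b_def by (auto simp: mod_back)
  have ya: "y = (x + a) mod n" using xy unfolding a_def by (auto simp: mod_back)
  have xb: "x = (y + b) mod n" using xy unfolding b_def by (auto simp: mod_back)
  have n: "0 < n" using xy by simp
  have t: "tdist n x y = min a b" unfolding tdist_def a_def b_def by (simp add: min.commute)
  have sM: "min r M \<le> M" "min r M \<le> r" by auto
  show ?thesis
  proof (cases "a \<le> b")
    case True
    have ta: "tdist n x y = a" using t True by simp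
    have "a + min r M \<le> n" using True ab sM M by linarith
    moreover have "min r (min M a) \<le> min r M" "min r (min M a) \<le> a" by auto
    ultimately show ?thesis unfolding ta using hit_card_aux[OF n xy(1) ya ab(2) sM(2), of "min r (min M a)"]
      by blast
  next
    case False
    have tb: "tdist n x y = b" using t False by simp
    have "b + min r M \<le> n" using False ab sM M by linarith
    moreover have "min r (min M b) \<le> min r M" "min r (min M b) \<le> b" by auto
    ultimately show ?thesis unfolding tb hitset_sym[of n x] using hit_card_aux[OF n xy(2) xb ab(3) sM(2), of "min r (min M b)"]
      by blast
  qed
qed

lemma pairs_count:
  fixes n K :: nat
  shows "card {(x,y). x < n \<and> y < n \<and> tdist n x y < K} \<le> 2 * n * K"
proof -
  let ?S = "{(x,y). x < n \<and> y < n \<and> tdist n x y < K}"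
  let ?F = "(\<lambda>(x,j). (x, (x + j) mod n)) ` ({..<n} \<times> {..<K})"
  let ?G = "(\<lambda>(x,j). (x, (x + n - j) mod n)) ` ({..<n} \<times> {..<K})"
  have "?S \<subseteq> ?F \<union> ?G"
  proof
    fix p assume "p \<in> ?S"
    then obtain x y where p: "p = (x,y)" and xy: "x < n" "y < n" and t: "tdist n x y < K" by auto
    define a where "a = (y + n - x) mod n"
    define b where "b = (x + n - y) mod n"
    have ya: "y = (x + a) mod n" using xy unfolding a_def by (auto simp: mod_back)
    have yb: "y = (x + n - b) mod n" using xy unfolding b_def by (auto simp: mod_back)
    have "a < K \<or> b < K" using t unfolding tdist_def a_def b_def by auto
    then show "p \<in> ?F \<union> ?G"
    proof
      assume "a < K" then show ?thesis using p xy ya by (auto intro!: image_eqI[of _ _ "(x,a)"])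
    next
      assume "b < K" then show ?thesis using p xy yb by (auto intro!: image_eqI[of _ _ "(x,b)"])
    qed
  qed
  then have "card ?S \<le> card (?F \<union> ?G)" by (intro card_mono) auto
  also have "\<dots> \<le> card ?F + card ?G" by (rule card_Un_le)
  also have "\<dots> \<le> n * K + n * K"
  proof (intro add_mono)
    show "card ?F \<le> n * K" using card_image_le[of "{..<n} \<times> {..<K}"] by (simp add: card_cartesian_product)
    show "card ?G \<le> n * K" using card_image_le[of "{..<n} \<times> {..<K}"] by (simp add: card_cartesian_product)
  qed
  finally show ?thesis by simp
qed


definition missset :: "nat \<Rightarrow> nat \<Rightarrow> nat \<Rightarrow> nat \<Rightarrow> nat set" where
  "missset n x y r = {u. x \<notin> arc n u r \<and> y \<notin> arc n u r}"

definition missq :: "nat pmf \<Rightarrow> nat \<Rightarrow> nat \<Rightarrow> nat \<Rightarrow> ennreal" where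
  "missq R n x y = (\<integral>\<^sup>+ r. emeasure (pmf_of_set {0..<n}) (missset n x y r) \<partial>R)"

lemma covered_miss:
  "emeasure (covered R n k) {X. x \<notin> X \<and> y \<notin> X} = missq R n x y ^ k"
proof (induction k)
  case 0
  then show ?case by (simp add: indicator_def)
next
  case (Suc k)
  let ?A = "{X. x \<notin> X \<and> y \<notin> X}"
  have ind: "indicator ?A (C \<union> arc n u r) = (indicator ?A C * indicator (missset n x y r) u :: ennreal)" for C u r
    by (auto simp: indicator_def missset_def)
  have "emeasure (covered R n (Suc k)) ?A =
     (\<integral>\<^sup>+C. indicator ?A C * (\<integral>\<^sup>+r. (\<integral>\<^sup>+u. indicator (missset n x y r) u \<partial>pmf_of_set {0..<n}) \<partial>R) \<partial>covered R n k)"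
    by (simp add: ind nn_integral_cmult)
  also have "\<dots> = (\<integral>\<^sup>+C. indicator ?A C * missq R n x y \<partial>covered R n k)"
    by (simp add: missq_def)
  also have "\<dots> = emeasure (covered R n k) ?A * missq R n x y"
    by (simp add: nn_integral_multc)
  finally show ?case using Suc by (simp add: mult.commute)
qed

lemma poisson_gen:
  fixes t q :: real assumes t: "0 < t" and q: "0 \<le> q"
  shows "(\<integral>\<^sup>+k. ennreal (q ^ k) \<partial>measure_pmf (poisson_pmf t)) = ennreal (exp (- t) * exp (t * q))"
proof -
  have s: "(\<lambda>k. (t * q) ^ k / fact k * exp (-t)) sums (exp (t * q) * exp (-t))"
    using sums_mult2[OF exp_converges[of "t*q"], of "exp (-t)"] by (simp add: divide_inverse mult.commute scaleR_conv_of_real)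
  have "(\<integral>\<^sup>+k. ennreal (q ^ k) \<partial>measure_pmf (poisson_pmf t)) =
        (\<integral>\<^sup>+k. ennreal ((t * q) ^ k / fact k * exp (-t)) \<partial>count_space UNIV)"
    unfolding nn_integral_measure_pmf using t q
    by (intro nn_integral_cong) (simp add: ennreal_mult'[symmetric] power_mult_distrib field_simps)
  also have "\<dots> = (\<Sum>k. ennreal ((t * q) ^ k / fact k * exp (-t)))"
    by (rule nn_integral_count_space_nat)
  also have "\<dots> = ennreal (\<Sum>k. (t * q) ^ k / fact k * exp (-t))"
    using s t q by (intro suminf_ennreal2) (auto simp: sums_iff)
  also have "\<dots> = ennreal (exp (- t) * exp (t * q))" using s by (simp add: sums_iff mult.commute)
  finally show ?thesis .
qed


definition gtr :: "nat pmf \<Rightarrow> nat \<Rightarrow> real" where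
  "gtr R k = (\<integral>r. real (min r k) \<partial>R)"

lemma integrable_min: "integrable (measure_pmf R) (\<lambda>r. real (min r k))"
  by (rule measure_pmf.integrable_const_bound[where B="real k"]) auto

lemma measure_miss:
  fixes n x y M r :: nat
  assumes xy: "x < n" "y < n" "x \<noteq> y" and M: "4 * M \<le> n"
  shows "measure (pmf_of_set {0..<n}) (missset n x y r) \<le> 1 - (real (min r M) + real (min r (min M (tdist n x y)))) / n"
proof -
  have n: "0 < n" using xy by simp
  have eq: "{0..<n} \<inter> missset n x y r = {0..<n} - hitset n x y r" unfolding missset_def hitset_def by auto
  have hs: "hitset n x y r \<subseteq> {0..<n}" unfolding hitset_def by auto
  have c: "card ({0..<n} - hitset n x y r) = n - card (hitset n x y r)"
    using hs by (simp add: card_Diff_subset finite_subset)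
  have cle: "card (hitset n x y r) \<le> n" using hs card_mono[of "{0..<n}"] by fastforce
  have hc: "min r M + min r (min M (tdist n x y)) \<le> card (hitset n x y r)" by (rule hit_card[OF xy M])
  have "measure (pmf_of_set {0..<n}) (missset n x y r) = real (n - card (hitset n x y r)) / n"
    using n by (simp add: measure_pmf_of_set eq c)
  also have "\<dots> = 1 - real (card (hitset n x y r)) / n" using cle n by (simp add: of_nat_diff field_simps)
  also have "\<dots> \<le> 1 - (real (min r M) + real (min r (min M (tdist n x y)))) / n"
    using hc n by (intro diff_left_mono divide_right_mono) (simp_all flip: of_nat_add)
  finally show ?thesis .
qed

lemma missq_bound:
  fixes n x y M :: nat
  assumes xy: "x < n" "y < n" "x \<noteq> y" and M: "4 * M \<le> n"
  shows "\<exists>q. missq R n x y = ennreal q \<and> 0 \<le> q \<and> q \<le> 1 - (gtr R M + gtr R (min M (tdist n x y))) / n"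
proof -
  have n: "0 < n" using xy by simp
  let ?e = "min M (tdist n x y)"
  define f where "f r = measure (pmf_of_set {0..<n}) (missset n x y r)" for r
  have fi: "integrable (measure_pmf R) f"
    unfolding f_def by (rule measure_pmf.integrable_const_bound[where B=1]) auto
  have "missq R n x y = (\<integral>\<^sup>+r. ennreal (f r) \<partial>R)"
    unfolding missq_def f_def using n by (simp add: measure_pmf.emeasure_eq_measure)
  also have "\<dots> = ennreal (\<integral>r. f r \<partial>R)"
    by (intro nn_integral_eq_integral[OF fi]) (simp add: f_def)
  finally have e: "missq R n x y = ennreal (\<integral>r. f r \<partial>R)" .
  have "(\<integral>r. f r \<partial>R) \<le> (\<integral>r. 1 - (real (min r M) + real (min r ?e)) / n \<partial>R)"
  proof (rule integral_mono[OF fi])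
    show "integrable (measure_pmf R) (\<lambda>r. 1 - (real (min r M) + real (min r ?e)) / n)"
      using integrable_min[of R M] integrable_min[of R ?e] by simp
    show "f r \<le> 1 - (real (min r M) + real (min r ?e)) / n" for r
      unfolding f_def by (rule measure_miss[OF xy M])
  qed
  also have "\<dots> = 1 - (gtr R M + gtr R ?e) / n"
    using integrable_min[of R M] integrable_min[of R ?e] by (simp add: gtr_def add_divide_distrib)
  finally show ?thesis using e by (intro exI[of _ "\<integral>r. f r \<partial>R"]) (auto simp: f_def)
qed


lemma pair_prob:
  fixes n x y M :: nat and t :: real
  assumes t: "0 < t" and xy: "x < n" "y < n" "x \<noteq> y" and M: "4 * M \<le> n"
  shows "measure_pmf.prob (cover_proc R n t) {X. x \<notin> X \<and> y \<notin> X}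
           \<le> exp (- (t * (gtr R M + gtr R (min M (tdist n x y))) / n))"
proof -
  obtain q where q: "missq R n x y = ennreal q" "0 \<le> q" "q \<le> 1 - (gtr R M + gtr R (min M (tdist n x y))) / n"
    using missq_bound[OF xy M, of R] by blast
  have "emeasure (cover_proc R n t) {X. x \<notin> X \<and> y \<notin> X} = (\<integral>\<^sup>+k. ennreal (q ^ k) \<partial>measure_pmf (poisson_pmf t))"
    unfolding cover_proc_def by (simp add: covered_miss q(1) ennreal_power q(2))
  also have "\<dots> = ennreal (exp (- t) * exp (t * q))" by (rule poisson_gen[OF t q(2)])
  finally have "measure_pmf.prob (cover_proc R n t) {X. x \<notin> X \<and> y \<notin> X} = exp (- t) * exp (t * q)"
    by (simp add: measure_pmf.emeasure_eq_measure)
  also have "\<dots> = exp (- (t * (1 - q)))" by (simp add: exp_add[symmetric] algebra_simps)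
  also have "\<dots> \<le> exp (- (t * (gtr R M + gtr R (min M (tdist n x y))) / n))"
  proof -
    have "(gtr R M + gtr R (min M (tdist n x y))) / n \<le> 1 - q" using q(3) by linarith
    then have "t * ((gtr R M + gtr R (min M (tdist n x y))) / n) \<le> t * (1 - q)"
      using t by (intro mult_left_mono) auto
    then show ?thesis by simp
  qed
  finally show ?thesis .
qed

lemma gtr_ge1:
  assumes pos: "set_pmf R \<subseteq> {1..}" and k: "1 \<le> k"
  shows "1 \<le> gtr R k"
proof -
  have "(\<integral>r. 1 \<partial>measure_pmf R) \<le> gtr R k"
    unfolding gtr_def
  proof (rule integral_mono_AE)
    show "AE r in measure_pmf R. 1 \<le> real (min r k)"
      unfolding AE_measure_pmf_iff using pos k by force
  qed (auto simp: integrable_min)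
  then show ?thesis by simp
qed

lemma gtr_lim:
  assumes fm: "integrable (measure_pmf R) real"
  shows "(\<lambda>k. gtr R k) \<longlonglongrightarrow> measure_pmf.expectation R real"
  unfolding gtr_def
proof (rule integral_dominated_convergence[where w = real])
  show "AE r in measure_pmf R. (\<lambda>k. real (min r k)) \<longlonglongrightarrow> real r"
  proof (rule AE_I2)
    fix r :: nat
    have "eventually (\<lambda>k. real (min r k) = real r) sequentially"
      using eventually_ge_at_top[of r] by eventually_elim auto
    then show "(\<lambda>k. real (min r k)) \<longlonglongrightarrow> real r" by (rule tendsto_eventually)
  qed
qed (auto simp: fm)


lemma bound_n:
  fixes R :: "nat pmf" and n M :: nat and \<alpha> \<mu> \<beta> a b G :: real
  assumes pos: "set_pmf R \<subseteq> {1..}" and M1: "1 \<le> M" and n: "4 * M \<le> n"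
    and \<alpha>: "0 < \<alpha>" and \<mu>: "0 < \<mu>" and G: "G = gtr R M"
    and a: "a = \<alpha> * (G + 1) / \<mu>" and b: "b = 2 * \<alpha> * G / \<mu>"
  shows "measure_pmf.prob (cover_proc R n (\<alpha> * real n * ln (real n) / \<mu>)) {X. close_pair n \<beta> X}
     \<le> 2 * M * real n powr (1 - a) + 2 * real n powr (1 + \<beta> - b) + 2 * real n powr (1 - b)"
proof -
  define t where "t = \<alpha> * real n * ln (real n) / \<mu>"
  have n4: "4 \<le> n" using M1 n by linarith
  then have lnpos: "0 < ln (real n)" by simp
  have t: "0 < t" unfolding t_def using \<alpha> \<mu> lnpos n4 by (intro divide_pos_pos mult_pos_pos) auto
  define Pairs where "Pairs = {(x,y). x < n \<and> y < n \<and> x \<noteq> y \<and> real (tdist n x y) < real n powr \<beta>}"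
  define A where "A p = {X. fst p \<notin> X \<and> snd p \<notin> X}" for p :: "nat \<times> nat"
  have finP: "finite Pairs" by (rule finite_subset[of _ "{..<n} \<times> {..<n}"]) (auto simp: Pairs_def)
  have incl: "{X. close_pair n \<beta> X} \<subseteq> (\<Union>p\<in>Pairs. A p)"
    unfolding close_pair_def uncovered_def Pairs_def A_def by force
  have "measure_pmf.prob (cover_proc R n t) {X. close_pair n \<beta> X} \<le> measure_pmf.prob (cover_proc R n t) (\<Union>p\<in>Pairs. A p)"
    using incl by (intro measure_pmf.finite_measure_mono) auto
  also have "\<dots> \<le> (\<Sum>p\<in>Pairs. measure_pmf.prob (cover_proc R n t) (A p))"
    using finP by (intro measure_pmf.finite_measure_subadditive_finite) auto
  also have "\<dots> \<le> (\<Sum>p\<in>Pairs. (if tdist n (fst p) (snd p) < M then real n powr (- a) else 0) + real n powr (- b))"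
  proof (rule sum_mono)
    fix p assume p: "p \<in> Pairs"
    obtain x y where pxy: "p = (x,y)" by (cases p)
    have xy: "x < n" "y < n" "x \<noteq> y" using p pxy unfolding Pairs_def by auto
    define g where "g = gtr R (min M (tdist n x y))"
    have "measure_pmf.prob (cover_proc R n t) (A p) \<le> exp (- (t * (G + g) / n))"
      using pair_prob[OF t xy n, of R] unfolding A_def pxy G g_def by simp
    also have "\<dots> = real n powr (- (\<alpha> * (G + g) / \<mu>))"
      unfolding t_def powr_def using n4 by simp
    also have "\<dots> \<le> (if tdist n x y < M then real n powr (- a) else 0) + real n powr (- b)"
    proof (cases "tdist n x y < M")
      case True
      have "1 \<le> g" unfolding g_def using tdist_pos[OF xy] M1 by (intro gtr_ge1[OF pos]) auto
      then have "- (\<alpha> * (G + g) / \<mu>) \<le> - a" unfolding a using \<alpha> \<mu>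
        by (intro le_imp_neg_le divide_right_mono mult_left_mono) auto
      then have "real n powr (- (\<alpha> * (G + g) / \<mu>)) \<le> real n powr (- a)"
        using n4 by (intro powr_mono) auto
      moreover have "0 \<le> real n powr (- b)" by simp
      ultimately show ?thesis using True by (simp only: if_True)
    next
      case False
      then have "g = G" unfolding g_def G by simp
      then have "- (\<alpha> * (G + g) / \<mu>) = - b" unfolding b by simp
      then show ?thesis using False by simp
    qed
    finally show "measure_pmf.prob (cover_proc R n t) (A p) \<le> (if tdist n (fst p) (snd p) < M then real n powr (- a) else 0) + real n powr (- b)"
      using pxy by simp
  qed
  also have "\<dots> = real (card (Pairs \<inter> {p. tdist n (fst p) (snd p) < M})) * real n powr (- a) + real (card Pairs) * real n powr (- b)"
    using finP by (simp add: sum.distrib sum.If_cases)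
  also have "\<dots> \<le> real (2 * n * M) * real n powr (- a) + real (2 * n * nat \<lceil>real n powr \<beta>\<rceil>) * real n powr (- b)"
  proof (intro add_mono mult_right_mono)
    have "Pairs \<inter> {p. tdist n (fst p) (snd p) < M} \<subseteq> {(x,y). x < n \<and> y < n \<and> tdist n x y < M}"
      unfolding Pairs_def by auto
    then have "card (Pairs \<inter> {p. tdist n (fst p) (snd p) < M}) \<le> card {(x,y). x < n \<and> y < n \<and> tdist n x y < M}"
      by (intro card_mono) (auto intro: finite_subset[of _ "{..<n} \<times> {..<n}"])
    also have "\<dots> \<le> 2 * n * M" by (rule pairs_count)
    finally show "real (card (Pairs \<inter> {p. tdist n (fst p) (snd p) < M})) \<le> real (2 * n * M)" by linarith
    have "Pairs \<subseteq> {(x,y). x < n \<and> y < n \<and> tdist n x y < nat \<lceil>real n powr \<beta>\<rceil>}"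
    proof
      fix p assume "p \<in> Pairs"
      then obtain x y where "p = (x,y)" "x < n" "y < n" "real (tdist n x y) < real n powr \<beta>"
        unfolding Pairs_def by auto
      moreover have "tdist n x y < nat \<lceil>real n powr \<beta>\<rceil>" if h: "real (tdist n x y) < real n powr \<beta>"
      proof -
        have r: "real (tdist n x y) < real_of_int \<lceil>real n powr \<beta>\<rceil>"
          using h le_of_int_ceiling[of "real n powr \<beta>"] by linarith
        then have "int (tdist n x y) < \<lceil>real n powr \<beta>\<rceil>" by (metis of_int_less_iff of_int_of_nat_eq)
        then show ?thesis by (simp add: zless_nat_eq_int_zless)
      qed
      ultimately show "p \<in> {(x,y). x < n \<and> y < n \<and> tdist n x y < nat \<lceil>real n powr \<beta>\<rceil>}" by auto
    qed
    then have "card Pairs \<le> card {(x,y). x < n \<and> y < n \<and> tdist n x y < nat \<lceil>real n powr \<beta>\<rceil>}"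
      by (intro card_mono) (auto intro: finite_subset[of _ "{..<n} \<times> {..<n}"])
    also have "\<dots> \<le> 2 * n * nat \<lceil>real n powr \<beta>\<rceil>" by (rule pairs_count)
    finally show "real (card Pairs) \<le> real (2 * n * nat \<lceil>real n powr \<beta>\<rceil>)" by linarith
  qed auto
  also have "\<dots> \<le> 2 * M * real n powr (1 - a) + 2 * real n powr (1 + \<beta> - b) + 2 * real n powr (1 - b)"
  proof -
    have c: "real (nat \<lceil>real n powr \<beta>\<rceil>) \<le> real n powr \<beta> + 1"
    proof -
      have "0 \<le> \<lceil>real n powr \<beta>\<rceil>" using powr_ge_zero[of "real n" \<beta>] by (metis ceiling_mono ceiling_zero)
      then have "real (nat \<lceil>real n powr \<beta>\<rceil>) = real_of_int \<lceil>real n powr \<beta>\<rceil>" by simp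
      also have "\<dots> \<le> real n powr \<beta> + 1" using of_int_ceiling_le_add_one by blast
      finally show ?thesis .
    qed
    have n0: "0 < real n" using n4 by simp
    have e1: "real n * real n powr (- a) = real n powr (1 - a)"
      using n0 powr_add[of "real n" 1 "-a"] by simp
    have e2: "real n * real n powr \<beta> * real n powr (- b) = real n powr (1 + \<beta> - b)"
      using n0 powr_add[of "real n" "1 + \<beta>" "-b"] powr_add[of "real n" 1 "\<beta>"] by simp
    have e3: "real n * real n powr (- b) = real n powr (1 - b)"
      using n0 powr_add[of "real n" 1 "-b"] by simp
    have "real (2 * n * nat \<lceil>real n powr \<beta>\<rceil>) * real n powr (- b) \<le> (2 * real n * (real n powr \<beta> + 1)) * real n powr (- b)"
    proof (rule mult_right_mono)
      have "real (2 * n * nat \<lceil>real n powr \<beta>\<rceil>) = (2 * real n) * real (nat \<lceil>real n powr \<beta>\<rceil>)" by simp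
      also have "\<dots> \<le> (2 * real n) * (real n powr \<beta> + 1)" by (rule mult_left_mono[OF c]) simp
      finally show "real (2 * n * nat \<lceil>real n powr \<beta>\<rceil>) \<le> 2 * real n * (real n powr \<beta> + 1)" .
    qed simp
    also have "\<dots> = 2 * (real n * real n powr \<beta> * real n powr (- b)) + 2 * (real n * real n powr (- b))"
      by (simp add: algebra_simps)
    finally have "real (2 * n * nat \<lceil>real n powr \<beta>\<rceil>) * real n powr (- b) \<le> 2 * real n powr (1 + \<beta> - b) + 2 * real n powr (1 - b)"
      unfolding e2 e3 .
    moreover have "real (2 * n * M) * real n powr (- a) = 2 * M * real n powr (1 - a)"
      unfolding e1[symmetric] by simp
    ultimately show ?thesis by linarith
  qed
  finally show ?thesis unfolding t_def .
qed


theorem mainTheorem6: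
  fixes R :: "nat pmf"
  assumes pos: "set_pmf R \<subseteq> {1..}"
    and finite_mean: "integrable (measure_pmf R) real"
  shows "\<forall>\<beta>. 0 < \<beta> \<and> \<beta> < 1 \<longrightarrow>
    (\<exists>\<alpha>. 0 < \<alpha> \<and> \<alpha> < 1 \<and>
      ((\<lambda>n. measure_pmf.prob
          (cover_proc R n (\<alpha> * real n * ln (real n) / measure_pmf.expectation R real))
          {X. close_pair n \<beta> X}) \<longlonglongrightarrow> 0))"
proof (intro allI impI)
  fix \<beta> :: real assume \<beta>: "0 < \<beta> \<and> \<beta> < 1"
  define \<mu> where "\<mu> = measure_pmf.expectation R real"
  have g1: "gtr R 1 \<le> \<mu>" unfolding gtr_def \<mu>_def
    by (intro integral_mono integrable_min finite_mean) auto
  have \<mu>1: "1 \<le> \<mu>" using gtr_ge1[OF pos, of 1] g1 by simp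
  define \<theta> where "\<theta> = max ((1 + \<beta>) / 2) (\<mu> / (\<mu> + 1))"
  have \<theta>1: "\<theta> < 1" "(1 + \<beta>) / 2 \<le> \<theta>" "\<mu> / (\<mu> + 1) \<le> \<theta>" "0 < \<theta>"
    using \<beta> \<mu>1 unfolding \<theta>_def by (auto simp: max_def)
  define \<alpha> where "\<alpha> = (1 + \<theta>) / 2"
  have \<alpha>: "0 < \<alpha>" "\<alpha> < 1" "\<theta> < \<alpha>" using \<theta>1 unfolding \<alpha>_def by auto
  define \<kappa> where "\<kappa> = max (\<theta> / \<alpha>) (1 / \<alpha> - 1 / \<mu>)"
  have k1: "\<theta> / \<alpha> < 1" using \<alpha> by simp
  have "\<mu> / (\<mu> + 1) < \<alpha>" using \<alpha> \<theta>1 by linarith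
  then have "\<mu> < \<alpha> * (\<mu> + 1)" using \<mu>1 by (simp add: field_simps)
  then have k2: "1 / \<alpha> - 1 / \<mu> < 1" using \<alpha> \<mu>1 by (simp add: field_simps)
  have \<kappa>: "\<kappa> < 1" unfolding \<kappa>_def using k1 k2 by simp
  have "\<kappa> * \<mu> < \<mu>" using \<kappa> \<mu>1 by simp
  then have "eventually (\<lambda>k. \<kappa> * \<mu> < gtr R k) sequentially"
    using gtr_lim[OF finite_mean] unfolding \<mu>_def by (rule order_tendstoD(1)[rotated])
  then obtain N where N: "\<And>k. k \<ge> N \<Longrightarrow> \<kappa> * \<mu> < gtr R k" by (auto simp: eventually_sequentially)
  define M where "M = max N 1"
  have M1: "1 \<le> M" and MG: "\<kappa> * \<mu> < gtr R M" using N unfolding M_def by auto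
  define G where "G = gtr R M"
  define a where "a = \<alpha> * (G + 1) / \<mu>"
  define b where "b = 2 * \<alpha> * G / \<mu>"
  have "(1 / \<alpha> - 1 / \<mu>) * \<mu> < G" using MG unfolding G_def \<kappa>_def using \<mu>1
    by (smt (verit, ccfv_SIG) max.cobounded2 mult_right_mono)
  moreover have "(1 / \<alpha> - 1 / \<mu>) * \<mu> = \<mu> / \<alpha> - 1" using \<mu>1 by (simp add: field_simps)
  ultimately have "\<mu> / \<alpha> - 1 < G" by linarith
  then have "\<mu> < \<alpha> * (G + 1)" using \<alpha> by (simp add: field_simps)
  then have a1: "1 < a" unfolding a_def using \<mu>1 by simp
  have "(\<theta> / \<alpha>) * \<mu> < G" using MG unfolding G_def \<kappa>_def using \<mu>1
    by (smt (verit, ccfv_SIG) max.cobounded1 mult_right_mono)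
  then have "\<theta> * \<mu> < \<alpha> * G" using \<alpha> by (simp add: field_simps)
  moreover have "(1 + \<beta>) / 2 * \<mu> \<le> \<theta> * \<mu>" using \<theta>1 \<mu>1 by (intro mult_right_mono) auto
  ultimately have "(1 + \<beta>) * \<mu> < 2 * \<alpha> * G" by linarith
  then have b1: "1 + \<beta> < b" unfolding b_def using \<mu>1 by (simp add: field_simps)
  define B where "B n = 2 * M * real n powr (1 - a) + 2 * real n powr (1 + \<beta> - b) + 2 * real n powr (1 - b)" for n :: nat
  have lim1: "(\<lambda>n::nat. real n powr c) \<longlonglongrightarrow> 0" if "c < 0" for c
    by (rule tendsto_neg_powr[OF that filterlim_real_sequentially])
  have "B \<longlonglongrightarrow> real (2 * M) * 0 + 2 * 0 + 2 * 0" unfolding B_def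
    using a1 b1 \<beta> by (intro tendsto_add tendsto_mult tendsto_const lim1) auto
  then have B0: "B \<longlonglongrightarrow> 0" by simp
  show "\<exists>\<alpha>. 0 < \<alpha> \<and> \<alpha> < 1 \<and>
      ((\<lambda>n. measure_pmf.prob
          (cover_proc R n (\<alpha> * real n * ln (real n) / measure_pmf.expectation R real))
          {X. close_pair n \<beta> X}) \<longlonglongrightarrow> 0)"
  proof (intro exI conjI)
    show "0 < \<alpha>" "\<alpha> < 1" using \<alpha> by auto
    show "(\<lambda>n. measure_pmf.prob
          (cover_proc R n (\<alpha> * real n * ln (real n) / measure_pmf.expectation R real))
          {X. close_pair n \<beta> X}) \<longlonglongrightarrow> 0"
    proof (rule tendsto_sandwich[OF _ _ tendsto_const B0])
      show "\<forall>\<^sub>F n in sequentially. 0 \<le> measure_pmf.prob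
          (cover_proc R n (\<alpha> * real n * ln (real n) / measure_pmf.expectation R real))
          {X. close_pair n \<beta> X}" by simp
      have "\<forall>\<^sub>F n in sequentially. 4 * M \<le> n" by (rule eventually_ge_at_top)
      then show "\<forall>\<^sub>F n in sequentially. measure_pmf.prob
          (cover_proc R n (\<alpha> * real n * ln (real n) / measure_pmf.expectation R real))
          {X. close_pair n \<beta> X} \<le> B n"
      proof eventually_elim
        case (elim n)
        show ?case unfolding B_def \<mu>_def[symmetric]
          by (rule bound_n[OF pos M1 elim \<alpha>(1) _ G_def a_def b_def]) (use \<mu>1 in simp)
      qed
    qed
  qed
qed

end
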